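(* Let $G$ be a graph with smallest eigenvalue $\theta_{\min}(G)$ which is $s$-integrable, and let $N$ be a $\rho\times|V(G)|$ integral matrix with $A(G)+\lceil-\theta_{\min}(G)\rceil I=\frac{1}{s}N^TN$ (rows of $N$ are vectors indexed by $V(G)$). Then: \begin{enumerate} \item There is a row $\mathbf{r}$ of $N$ with $$|{\rm supp}(\mathbf{r})|\leq\frac{s\lceil-\theta_{\min}(G)\rceil\,|V(G)|}{\rho}\leq\frac{s\lceil-\theta_{\min}(G)\rceil\,|V(G)|}{{\rm rank}(N)}.$$ \item Let $\pi=\{V_1,\ldots,V_p\}$ be an equitable partition of $V(G)$ whose quotient matrix $Q_\pi$ has $\theta_{\min}(G)$ as its smallest eigenvalue. If $\theta_{\min}(G)$ is an integer, then for every row $\mathbf{r}$ of $N$ and every eigenvector $\mathbf{u}=(\mathbf{u}_1,\ldots,\mathbf{u}_p)^T$ of $Q_\pi$ with eigenvalue $\theta_{\min}(G)$, $$\sum_{i=1}^p\mathbf{u}_i\sum_{x\in V_i}\mathbf{r}_x=0.$$ \item For every row $\mathbf{r}$ of $N$, $$\sum_{x\in V(G)}\mathbf{r}_x\sum_{y\sim x}\mathbf{r}_y\;\geq\;\frac{1}{s}(\mathbf{r}\mathbf{r}^T)^2+\lfloor\theta_{\min}(G)\rfloor\,\mathbf{r}\mathbf{r}^T.$$ \item If $G'$ is an induced subgraph of $G$ with $\lfloor\theta_{\min}(G')\rfloor=\lfloor\theta_{\min}(G)\rfloor$, then $G'$ is also $s$-integrable. \end{enumerate}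
   Context: Graphs are finite, simple, undirected; $A(G)$ is the adjacency matrix and $\theta_{\min}(G)$ the smallest eigenvalue; $x\sim y$ means adjacency. ${\rm supp}(\mathbf{r})=\{i\mid \mathbf{r}_i\neq 0\}$. A graph $G$ is $s$-integrable ($s$ a positive integer) if there is an integral matrix $N$ with $A(G)-\lfloor\theta_{\min}(G)\rfloor I=\frac{1}{s}N^TN$ (equivalently, the lattice with Gram matrix $A(G)-\lfloor\theta_{\min}(G)\rfloor I$ scaled by $\sqrt{s}$ embeds in a standard lattice $\mathbb{Z}^m$). A partition $\pi=\{V_1,\ldots,V_p\}$ of $V(G)$ is equitable if for all $i,j$ every vertex of $V_i$ has the same number $q_{i,j}$ of neighbours in $V_j$; its quotient matrix is $Q_\pi=(q_{i,j})$. *)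

theory Defs
  imports Complex_Main
begin

text \<open>A finite simple undirected graph: finite nonempty vertex set V and a
  symmetric irreflexive adjacency relation E (only its restriction to V matters).\<close>
definition graph :: "'a set \<Rightarrow> ('a \<Rightarrow> 'a \<Rightarrow> bool) \<Rightarrow> bool" where
  "graph V E \<longleftrightarrow> finite V \<and> V \<noteq> {} \<and>
     (\<forall>x\<in>V. \<forall>y\<in>V. E x y \<longleftrightarrow> E y x) \<and> (\<forall>x\<in>V. \<not> E x x)"

definition adj :: "'a set \<Rightarrow> ('a \<Rightarrow> 'a \<Rightarrow> bool) \<Rightarrow> 'a \<Rightarrow> 'a \<Rightarrow> real" where
  "adj V E x y = (if x \<in> V \<and> y \<in> V \<and> E x y then 1 else 0)"

definition is_eigenvector :: "'i set \<Rightarrow> ('i \<Rightarrow> 'i \<Rightarrow> real) \<Rightarrow> real \<Rightarrow> ('i \<Rightarrow> real) \<Rightarrow> bool" where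
  "is_eigenvector I M lam v \<longleftrightarrow> (\<exists>x\<in>I. v x \<noteq> 0) \<and>
     (\<forall>x\<in>I. (\<Sum>y\<in>I. M x y * v y) = lam * v x)"

definition is_eigenvalue :: "'i set \<Rightarrow> ('i \<Rightarrow> 'i \<Rightarrow> real) \<Rightarrow> real \<Rightarrow> bool" where
  "is_eigenvalue I M lam \<longleftrightarrow> (\<exists>v. is_eigenvector I M lam v)"

definition smallest_eigenvalue :: "'i set \<Rightarrow> ('i \<Rightarrow> 'i \<Rightarrow> real) \<Rightarrow> real" where
  "smallest_eigenvalue I M = Min {lam. is_eigenvalue I M lam}"

definition theta_min :: "'a set \<Rightarrow> ('a \<Rightarrow> 'a \<Rightarrow> bool) \<Rightarrow> real" where
  "theta_min V E = smallest_eigenvalue V (adj V E)"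

definition kron :: "'a \<Rightarrow> 'a \<Rightarrow> real" where
  "kron x y = (if x = y then 1 else 0)"

text \<open>G is s-integrable: A(G) - floor(theta_min) I = (1/s) N^T N for an integral
  m x |V| matrix N (rows indexed by {..<m}, columns by V).\<close>
definition s_integrable :: "'a set \<Rightarrow> ('a \<Rightarrow> 'a \<Rightarrow> bool) \<Rightarrow> nat \<Rightarrow> bool" where
  "s_integrable V E s \<longleftrightarrow> (\<exists>(m::nat) (N::nat \<Rightarrow> 'a \<Rightarrow> int).
     \<forall>x\<in>V. \<forall>y\<in>V. adj V E x y - real_of_int \<lfloor>theta_min V E\<rfloor> * kron x y
        = (1 / real s) * (\<Sum>i<m. real_of_int (N i x * N i y)))"

definition supp_row :: "'a set \<Rightarrow> (nat \<Rightarrow> 'a \<Rightarrow> int) \<Rightarrow> nat \<Rightarrow> 'a set" where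
  "supp_row V N i = {x \<in> V. N i x \<noteq> 0}"

text \<open>Rank of the m x |V| matrix N (over the reals), as its row rank: the maximal
  number of linearly independent rows.\<close>
definition rows_lin_indep :: "'a set \<Rightarrow> (nat \<Rightarrow> 'a \<Rightarrow> int) \<Rightarrow> nat set \<Rightarrow> bool" where
  "rows_lin_indep V N S \<longleftrightarrow> (\<forall>c::nat \<Rightarrow> real.
     (\<forall>x\<in>V. (\<Sum>i\<in>S. c i * real_of_int (N i x)) = 0) \<longrightarrow> (\<forall>i\<in>S. c i = 0))"

definition mat_rank :: "'a set \<Rightarrow> nat \<Rightarrow> (nat \<Rightarrow> 'a \<Rightarrow> int) \<Rightarrow> nat" where
  "mat_rank V m N = Max {card S | S. S \<subseteq> {..<m} \<and> rows_lin_indep V N S}"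

definition is_partition :: "'a set \<Rightarrow> nat \<Rightarrow> (nat \<Rightarrow> 'a set) \<Rightarrow> bool" where
  "is_partition V p P \<longleftrightarrow> (\<forall>i<p. P i \<noteq> {} \<and> P i \<subseteq> V) \<and>
     (\<forall>i<p. \<forall>j<p. i \<noteq> j \<longrightarrow> P i \<inter> P j = {}) \<and> (\<Union>i<p. P i) = V"

definition equitable :: "'a set \<Rightarrow> ('a \<Rightarrow> 'a \<Rightarrow> bool) \<Rightarrow> nat \<Rightarrow> (nat \<Rightarrow> 'a set) \<Rightarrow> bool" where
  "equitable V E p P \<longleftrightarrow> is_partition V p P \<and>
     (\<forall>i<p. \<forall>j<p. \<forall>x\<in>P i. \<forall>y\<in>P i. card {z \<in> P j. E x z} = card {z \<in> P j. E y z})"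

text \<open>Quotient matrix q_{ij} = number of neighbours in V_j of a vertex of V_i.\<close>
definition quotient_matrix :: "('a \<Rightarrow> 'a \<Rightarrow> bool) \<Rightarrow> (nat \<Rightarrow> 'a set) \<Rightarrow> nat \<Rightarrow> nat \<Rightarrow> real" where
  "quotient_matrix E P i j = real (card {z \<in> P j. E (SOME x. x \<in> P i) z})"

end

theory Submission imports Defs begin

lemma qf:
  fixes N :: "nat \<Rightarrow> 'a \<Rightarrow> int" and M :: "'a \<Rightarrow> 'a \<Rightarrow> real"
  assumes "\<forall>x\<in>V. \<forall>y\<in>V. M x y = (1 / real s) * (\<Sum>i<rho. real_of_int (N i x * N i y))"
  shows "(\<Sum>x\<in>V. \<Sum>y\<in>V. w x * M x y * w y) = (1 / real s) * (\<Sum>i<rho. (\<Sum>x\<in>V. real_of_int (N i x) * w x)^2)"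
proof -
  have "(\<Sum>x\<in>V. \<Sum>y\<in>V. w x * M x y * w y) = (\<Sum>x\<in>V. \<Sum>y\<in>V. (1 / real s) * (\<Sum>i<rho. (real_of_int (N i x) * w x) * (real_of_int (N i y) * w y)))"
    using assms by (intro sum.cong refl) (simp add: sum_distrib_left sum_distrib_right mult_ac)
  also have "\<dots> = (1 / real s) * (\<Sum>i<rho. \<Sum>x\<in>V. \<Sum>y\<in>V. (real_of_int (N i x) * w x) * (real_of_int (N i y) * w y))"
    by (simp add: sum_distrib_left sum.swap[of _ "{..<rho}"])
  also have "\<dots> = (1 / real s) * (\<Sum>i<rho. (\<Sum>x\<in>V. real_of_int (N i x) * w x)^2)"
    by (simp add: power2_eq_square sum_product)
  finally show ?thesis .
qed

lemma adj_sum: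
  assumes "graph V E" "x \<in> V"
  shows "(\<Sum>y\<in>V. adj V E x y * f y) = (\<Sum>y\<in>{y\<in>V. E x y}. f y)"
proof -
  have fin: "finite V" using assms unfolding graph_def by auto
  show ?thesis using assms(2)
    by (simp add: sum.inter_filter[OF fin] adj_def, intro sum.cong, auto)
qed

lemma kron_sum:
  assumes "finite V"
  shows "(\<Sum>x\<in>V. \<Sum>y\<in>V. w x * (a x y + c * kron x y) * w y) = (\<Sum>x\<in>V. \<Sum>y\<in>V. w x * a x y * w y) + c * (\<Sum>x\<in>V. w x ^ 2)"
proof -
  have "\<And>x. x \<in> V \<Longrightarrow> (\<Sum>y\<in>V. w x * (a x y + c * kron x y) * w y) = (\<Sum>y\<in>V. w x * a x y * w y) + c * w x ^ 2"
  proof -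
    fix x assume x: "x \<in> V"
    have "(\<Sum>y\<in>V. w x * (a x y + c * kron x y) * w y) = (\<Sum>y\<in>V. w x * a x y * w y) + (\<Sum>y\<in>V. (if y = x then c * w x * w y else 0))"
      by (simp add: kron_def sum.distrib[symmetric] algebra_simps, intro sum.cong, auto)
    also have "(\<Sum>y\<in>V. (if y = x then c * w x * w y else 0)) = c * w x ^ 2"
      using x assms by (simp add: sum.delta' power2_eq_square)
    finally show "?thesis x" .
  qed
  then show ?thesis by (simp add: sum.distrib sum_distrib_left)
qed
theorem proposition3p1:
  fixes V :: "'a set" and E :: "'a \<Rightarrow> 'a \<Rightarrow> bool" and s :: nat
    and rho :: nat and N :: "nat \<Rightarrow> 'a \<Rightarrow> int"
  assumes G: "graph V E"
    and s_pos: "s > 0"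
    and integrable: "s_integrable V E s"
    and rho_pos: "rho > 0"
    and hN: "\<forall>x\<in>V. \<forall>y\<in>V. adj V E x y + real_of_int \<lceil>- theta_min V E\<rceil> * kron x y
               = (1 / real s) * (\<Sum>i<rho. real_of_int (N i x * N i y))"
  shows
    "(\<exists>i<rho.
        real (card (supp_row V N i))
          \<le> real s * real_of_int \<lceil>- theta_min V E\<rceil> * real (card V) / real rho
      \<and> real s * real_of_int \<lceil>- theta_min V E\<rceil> * real (card V) / real rho
          \<le> real s * real_of_int \<lceil>- theta_min V E\<rceil> * real (card V) / real (mat_rank V rho N))
   \<and> (\<forall>p P. equitable V E p P
        \<longrightarrow> smallest_eigenvalue {..<p} (quotient_matrix E P) = theta_min V E
        \<longrightarrow> theta_min V E \<in> \<int>
        \<longrightarrow> (\<forall>i<rho. \<forall>u. is_eigenvector {..<p} (quotient_matrix E P) (theta_min V E) u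
              \<longrightarrow> (\<Sum>j<p. u j * (\<Sum>x\<in>P j. real_of_int (N i x))) = 0))
   \<and> (\<forall>i<rho.
        (\<Sum>x\<in>V. real_of_int (N i x) * (\<Sum>y\<in>{y\<in>V. E x y}. real_of_int (N i y)))
          \<ge> (1 / real s) * (\<Sum>x\<in>V. real_of_int (N i x) ^ 2) ^ 2
             + real_of_int \<lfloor>theta_min V E\<rfloor> * (\<Sum>x\<in>V. real_of_int (N i x) ^ 2))
   \<and> (\<forall>V'. V' \<subseteq> V \<longrightarrow> V' \<noteq> {}
        \<longrightarrow> \<lfloor>theta_min V' E\<rfloor> = \<lfloor>theta_min V E\<rfloor>
        \<longrightarrow> s_integrable V' E s)"
proof -
  have fin: "finite V" and ne: "V \<noteq> {}" and irr: "\<forall>x\<in>V. \<not> E x x" using G unfolding graph_def by auto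
  define c where "c = real_of_int \<lceil>- theta_min V E\<rceil>"
  have hc: "c = - real_of_int \<lfloor>theta_min V E\<rfloor>" unfolding c_def by (simp add: ceiling_minus)
  have hN': "\<forall>x\<in>V. \<forall>y\<in>V. (\<lambda>x y. adj V E x y + c * kron x y) x y = (1 / real s) * (\<Sum>i<rho. real_of_int (N i x * N i y))"
    using hN unfolding c_def by simp
  have QF: "(\<Sum>x\<in>V. w x * (\<Sum>y\<in>V. adj V E x y * w y)) + c * (\<Sum>x\<in>V. w x ^ 2)
      = (1 / real s) * (\<Sum>i<rho. (\<Sum>x\<in>V. real_of_int (N i x) * w x)^2)" for w
  proof -
    have "(\<Sum>x\<in>V. w x * (\<Sum>y\<in>V. adj V E x y * w y)) = (\<Sum>x\<in>V. \<Sum>y\<in>V. w x * adj V E x y * w y)"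
      by (simp add: sum_distrib_left mult_ac)
    then show ?thesis using qf[OF hN', of w] kron_sum[OF fin, of w "adj V E" c] by simp
  qed
  have diag: "c = (1 / real s) * (\<Sum>i<rho. real_of_int (N i x) ^ 2)" if "x \<in> V" for x
  proof -
    have "adj V E x x + c * kron x x = (1 / real s) * (\<Sum>i<rho. real_of_int (N i x * N i x))"
      using hN that unfolding c_def by blast
    then show ?thesis using that irr by (simp add: adj_def kron_def power2_eq_square)
  qed
  have cnn: "c \<ge> 0"
  proof -
    obtain x where "x \<in> V" using ne by auto
    then show ?thesis using diag[of x] by (simp add: sum_nonneg)
  qed
  have P1: "\<exists>i<rho.
        real (card (supp_row V N i))
          \<le> real s * c * real (card V) / real rho
      \<and> real s * c * real (card V) / real rho
          \<le> real s * c * real (card V) / real (mat_rank V rho N)"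
  proof -
    have tot: "(\<Sum>i<rho. \<Sum>x\<in>V. real_of_int (N i x) ^ 2) = real s * c * real (card V)"
    proof -
      have "(\<Sum>i<rho. \<Sum>x\<in>V. real_of_int (N i x) ^ 2) = (\<Sum>x\<in>V. \<Sum>i<rho. real_of_int (N i x) ^ 2)"
        by (rule sum.swap)
      also have "\<dots> = (\<Sum>x\<in>V. real s * c)"
        using diag s_pos by (intro sum.cong refl) simp
      finally show ?thesis by simp
    qed
    have supple: "real (card (supp_row V N i)) \<le> (\<Sum>x\<in>V. real_of_int (N i x) ^ 2)" for i
    proof -
      have "real (card (supp_row V N i)) = (\<Sum>x\<in>V. if N i x \<noteq> 0 then 1 else 0)"
        unfolding supp_row_def using fin by (simp add: sum.inter_filter[symmetric])
      also have "\<dots> \<le> (\<Sum>x\<in>V. real_of_int (N i x) ^ 2)"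
      proof (rule sum_mono)
        fix x
        have "1 \<le> (N i x)^2" if nz: "N i x \<noteq> 0"
        proof -
          have a: "1 \<le> \<bar>N i x\<bar>" using nz by arith
          have "1 * 1 \<le> \<bar>N i x\<bar> * \<bar>N i x\<bar>" by (rule mult_mono) (use a in auto)
          then show ?thesis by (simp add: power2_eq_square abs_mult_self_eq)
        qed
        then have "N i x \<noteq> 0 \<Longrightarrow> 1 \<le> real_of_int (N i x) ^ 2"
          by (metis of_int_1 of_int_le_iff of_int_power)
        then show "(if N i x \<noteq> 0 then 1 else 0) \<le> real_of_int (N i x) ^ 2" by auto
      qed
      finally show ?thesis .
    qed
    have ex: "\<exists>i<rho. real (card (supp_row V N i)) \<le> real s * c * real (card V) / real rho"
    proof (rule ccontr)
      assume "\<not> ?thesis"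
      then have "\<forall>i\<in>{..<rho}. real s * c * real (card V) / real rho < real (card (supp_row V N i))" by auto
      then have "(\<Sum>i<rho. real s * c * real (card V) / real rho) < (\<Sum>i<rho. real (card (supp_row V N i)))"
        using rho_pos by (intro sum_strict_mono) auto
      also have "\<dots> \<le> real s * c * real (card V)"
        using sum_mono[of "{..<rho}" "\<lambda>i. real (card (supp_row V N i))" "\<lambda>i. \<Sum>x\<in>V. real_of_int (N i x)^2"] supple tot by simp
      finally show False using rho_pos by simp
    qed
    have second: "real s * c * real (card V) / real rho
          \<le> real s * c * real (card V) / real (mat_rank V rho N)"
    proof (cases "c = 0")
      case True then show ?thesis by simp
    next
      case False
      then have cpos: "c > 0" using cnn by auto
      obtain x where x: "x \<in> V" using ne by auto
      have "(\<Sum>i<rho. real_of_int (N i x) ^ 2) \<noteq> 0" using diag[OF x] False by auto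
      then have "\<exists>i\<in>{..<rho}. real_of_int (N i x)^2 \<noteq> 0" by (meson sum.neutral)
      then obtain i where i: "i < rho" "N i x \<noteq> 0" by auto
      define R where "R = {card S | S. S \<subseteq> {..<rho} \<and> rows_lin_indep V N S}"
      have Rsub: "R \<subseteq> {..rho}" unfolding R_def
        by (auto dest: card_mono[OF finite_lessThan])
      have finR: "finite R" using Rsub finite_subset by blast
      have indep: "rows_lin_indep V N {i}" unfolding rows_lin_indep_def using x i by auto
      have "1 \<in> R" unfolding R_def using indep i by force
      then have r1: "1 \<le> Max R" by (rule Max_ge[OF finR])
      have "Max R \<in> R" using finR \<open>1 \<in> R\<close> by (intro Max_in) auto
      then have r2: "Max R \<le> rho" using Rsub by auto
      have "mat_rank V rho N = Max R" unfolding mat_rank_def R_def by simp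
      then have "0 < real (mat_rank V rho N)" "real (mat_rank V rho N) \<le> real rho" using r1 r2 by auto
      moreover have "0 \<le> real s * c * real (card V)" using cnn by simp
      ultimately show ?thesis by (intro divide_left_mono) auto
    qed
    from ex second show ?thesis by blast
  qed
  have P3: "\<forall>i<rho.
        (\<Sum>x\<in>V. real_of_int (N i x) * (\<Sum>y\<in>{y\<in>V. E x y}. real_of_int (N i y)))
          \<ge> (1 / real s) * (\<Sum>x\<in>V. real_of_int (N i x) ^ 2) ^ 2
             + real_of_int \<lfloor>theta_min V E\<rfloor> * (\<Sum>x\<in>V. real_of_int (N i x) ^ 2)"
  proof (intro allI impI)
    fix i assume i: "i < rho"
    define w where "w x = real_of_int (N i x)" for x
    define S where "S = (\<Sum>x\<in>V. w x ^ 2)"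
    have L: "(\<Sum>x\<in>V. real_of_int (N i x) * (\<Sum>y\<in>{y\<in>V. E x y}. real_of_int (N i y)))
        = (\<Sum>x\<in>V. w x * (\<Sum>y\<in>V. adj V E x y * w y))"
      unfolding w_def using adj_sum[OF G] by (intro sum.cong refl) simp
    have "(\<Sum>x\<in>V. real_of_int (N i x) * w x) = S" unfolding S_def w_def by (simp add: power2_eq_square)
    then have "S ^ 2 \<le> (\<Sum>j<rho. (\<Sum>x\<in>V. real_of_int (N j x) * w x)^2)"
      using i member_le_sum[of i "{..<rho}" "\<lambda>j. (\<Sum>x\<in>V. real_of_int (N j x) * w x)^2"] by simp
    then have ST: "(1 / real s) * S ^ 2 \<le> (1 / real s) * (\<Sum>j<rho. (\<Sum>x\<in>V. real_of_int (N j x) * w x)^2)"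
      by (simp add: divide_right_mono)
    then show "(\<Sum>x\<in>V. real_of_int (N i x) * (\<Sum>y\<in>{y\<in>V. E x y}. real_of_int (N i y)))
          \<ge> (1 / real s) * (\<Sum>x\<in>V. real_of_int (N i x) ^ 2) ^ 2
             + real_of_int \<lfloor>theta_min V E\<rfloor> * (\<Sum>x\<in>V. real_of_int (N i x) ^ 2)"
    proof -
      let ?T = "(1 / real s) * (\<Sum>j<rho. (\<Sum>x\<in>V. real_of_int (N j x) * w x)^2)"
      let ?L = "(\<Sum>x\<in>V. w x * (\<Sum>y\<in>V. adj V E x y * w y))"
      have e1: "?L + c * S = ?T" using QF[of w] unfolding S_def .
      have e2: "c * S = - (real_of_int \<lfloor>theta_min V E\<rfloor> * S)" using hc by simp
      have "(1 / real s) * S ^ 2 + real_of_int \<lfloor>theta_min V E\<rfloor> * S \<le> ?L"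
        using e1 e2 ST by linarith
      then show ?thesis using L unfolding S_def w_def by simp
    qed
  qed
  have P4: "\<forall>V'. V' \<subseteq> V \<longrightarrow> V' \<noteq> {}
        \<longrightarrow> \<lfloor>theta_min V' E\<rfloor> = \<lfloor>theta_min V E\<rfloor>
        \<longrightarrow> s_integrable V' E s"
  proof (intro allI impI)
    fix V' assume sub: "V' \<subseteq> V" and fl: "\<lfloor>theta_min V' E\<rfloor> = \<lfloor>theta_min V E\<rfloor>"
    have "\<forall>x\<in>V'. \<forall>y\<in>V'. adj V' E x y - real_of_int \<lfloor>theta_min V' E\<rfloor> * kron x y
        = (1 / real s) * (\<Sum>i<rho. real_of_int (N i x * N i y))"
    proof (intro ballI)
      fix x y assume xy: "x \<in> V'" "y \<in> V'"
      have "adj V' E x y = adj V E x y" using xy sub by (auto simp: adj_def)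
      then show "adj V' E x y - real_of_int \<lfloor>theta_min V' E\<rfloor> * kron x y
        = (1 / real s) * (\<Sum>i<rho. real_of_int (N i x * N i y))"
        using hN xy sub fl hc unfolding c_def by auto
    qed
    then show "s_integrable V' E s" unfolding s_integrable_def by blast
  qed
  have P2: "\<forall>p P. equitable V E p P
        \<longrightarrow> smallest_eigenvalue {..<p} (quotient_matrix E P) = theta_min V E
        \<longrightarrow> theta_min V E \<in> \<int>
        \<longrightarrow> (\<forall>i<rho. \<forall>u. is_eigenvector {..<p} (quotient_matrix E P) (theta_min V E) u
              \<longrightarrow> (\<Sum>j<p. u j * (\<Sum>x\<in>P j. real_of_int (N i x))) = 0)"
  proof (intro allI impI)
    fix p P i u
    assume eq: "equitable V E p P" and int: "theta_min V E \<in> \<int>" and i: "i < rho"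
      and ev: "is_eigenvector {..<p} (quotient_matrix E P) (theta_min V E) u"
    define th where "th = theta_min V E"
    obtain k where "th = of_int k" using int unfolding th_def by (auto elim: Ints_cases)
    then have cth: "c = - th" using hc unfolding th_def by simp
    have part: "is_partition V p P" and eqt: "\<forall>i<p. \<forall>j<p. \<forall>x\<in>P i. \<forall>y\<in>P i. card {z \<in> P j. E x z} = card {z \<in> P j. E y z}"
      using eq unfolding equitable_def by blast+
    have Pne: "\<And>k. k < p \<Longrightarrow> P k \<noteq> {}" and PV: "\<And>k. k < p \<Longrightarrow> P k \<subseteq> V"
      and disj: "\<And>k l. k < p \<Longrightarrow> l < p \<Longrightarrow> k \<noteq> l \<Longrightarrow> P k \<inter> P l = {}"
      and cover: "(\<Union>k<p. P k) = V"
      using part unfolding is_partition_def by blast+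
    have eig: "\<And>k. k < p \<Longrightarrow> (\<Sum>j<p. quotient_matrix E P k j * u j) = th * u k"
      using ev unfolding is_eigenvector_def th_def by simp
    define v where "v x = (\<Sum>j<p. if x \<in> P j then u j else 0)" for x
    have vk: "v x = u k" if "k < p" "x \<in> P k" for k x
    proof -
      have "v x = (\<Sum>j<p. if j = k then u j else 0)"
        unfolding v_def
      proof (intro sum.cong refl)
        fix j assume j: "j \<in> {..<p}"
        show "(if x \<in> P j then u j else 0) = (if j = k then u j else 0)"
        proof (cases "j = k")
          case True then show ?thesis using that by simp
        next
          case False
          then have "P j \<inter> P k = {}" using disj[of j k] j that(1) by simp
          then show ?thesis using False that(2) by auto
        qed
      qed
      then show ?thesis using that by simp
    qed
    have Av: "(\<Sum>y\<in>V. adj V E x y * v y) = th * v x" if x: "x \<in> V" for x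
    proof -
      obtain k where k: "k < p" "x \<in> P k" using cover x by auto
      have "(\<Sum>y\<in>V. adj V E x y * v y) = (\<Sum>j<p. \<Sum>y\<in>V. adj V E x y * (if y \<in> P j then u j else 0))"
        unfolding v_def sum_distrib_left by (rule sum.swap)
      also have "\<dots> = (\<Sum>j<p. quotient_matrix E P k j * u j)"
      proof (rule sum.cong[OF refl])
        fix j assume j: "j \<in> {..<p}"
        have "(\<Sum>y\<in>V. adj V E x y * (if y \<in> P j then u j else 0)) = (\<Sum>y\<in>V. if y \<in> P j \<and> E x y then u j else 0)"
          using x by (intro sum.cong refl) (auto simp: adj_def)
        also have "\<dots> = (\<Sum>y\<in>{y\<in>V. y \<in> P j \<and> E x y}. u j)" by (rule sum.inter_filter[OF fin, symmetric])
        also have "{y\<in>V. y \<in> P j \<and> E x y} = {z \<in> P j. E x z}" using PV[of j] j by auto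
        also have "(\<Sum>y\<in>{z \<in> P j. E x z}. u j) = real (card {z \<in> P j. E x z}) * u j" by simp
        also have "card {z \<in> P j. E x z} = card {z \<in> P j. E (SOME x. x \<in> P k) z}"
        proof -
          have "(SOME x. x \<in> P k) \<in> P k" using Pne[OF k(1)] by (simp add: some_in_eq)
          moreover have "j < p" using j by simp
          ultimately show ?thesis using eqt k(1) k(2) by blast
        qed
        finally show "(\<Sum>y\<in>V. adj V E x y * (if y \<in> P j then u j else 0)) = quotient_matrix E P k j * u j"
          unfolding quotient_matrix_def .
      qed
      also have "\<dots> = th * v x" using eig k vk by simp
      finally show ?thesis .
    qed
    have "(\<Sum>x\<in>V. v x * (\<Sum>y\<in>V. adj V E x y * v y)) + c * (\<Sum>x\<in>V. v x ^ 2) = 0"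
    proof -
      have "(\<Sum>x\<in>V. v x * (\<Sum>y\<in>V. adj V E x y * v y)) = (\<Sum>x\<in>V. th * v x ^ 2)"
        using Av by (intro sum.cong refl) (simp add: power2_eq_square)
      also have "\<dots> = th * (\<Sum>x\<in>V. v x ^ 2)" by (rule sum_distrib_left[symmetric])
      finally show ?thesis using cth by simp
    qed
    then have "(\<Sum>j<rho. (\<Sum>x\<in>V. real_of_int (N j x) * v x)^2) = 0"
      using QF[of v] s_pos by simp
    then have "\<forall>j\<in>{..<rho}. (\<Sum>x\<in>V. real_of_int (N j x) * v x)^2 = 0"
      using sum_nonneg_eq_0_iff[of "{..<rho}" "\<lambda>j. (\<Sum>x\<in>V. real_of_int (N j x) * v x)^2"] by simp
    then have z: "(\<Sum>x\<in>V. real_of_int (N i x) * v x) = 0"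
      using i by simp
    have "(\<Sum>x\<in>V. real_of_int (N i x) * v x) = (\<Sum>j<p. \<Sum>x\<in>V. if x \<in> P j then u j * real_of_int (N i x) else 0)"
      unfolding v_def sum_distrib_left by (subst sum.swap) (intro sum.cong refl, simp)
    also have "\<dots> = (\<Sum>j<p. u j * (\<Sum>x\<in>P j. real_of_int (N i x)))"
    proof (rule sum.cong[OF refl])
      fix j assume j: "j \<in> {..<p}"
      have "(\<Sum>x\<in>V. if x \<in> P j then u j * real_of_int (N i x) else 0) = (\<Sum>x\<in>{x\<in>V. x \<in> P j}. u j * real_of_int (N i x))"
        using fin by (simp add: sum.inter_filter)
      also have "{x\<in>V. x \<in> P j} = P j" using PV[of j] j by auto
      finally show "(\<Sum>x\<in>V. if x \<in> P j then u j * real_of_int (N i x) else 0) = u j * (\<Sum>x\<in>P j. real_of_int (N i x))"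
        by (simp add: sum_distrib_left)
    qed
    finally show "(\<Sum>j<p. u j * (\<Sum>x\<in>P j. real_of_int (N i x))) = 0" using z by simp
  qed
  show ?thesis using P1 P2 P3 P4 unfolding c_def by blast
qed

end
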